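(* Let $k\in\mathbb{N}_0$. (1) If $n=1$, then $\mathtt{m}_{2k}-\mathtt{m}_1^{2k}\in\operatorname{qm}(\emptyset,\emptyset)$. (2) For any $n\in\mathbb{N}$ and $i_1,\dots,i_n\in\mathbb{N}_0$, $\mathtt{m}_{2ki_1,\dots,2ki_n}-\mathtt{m}_{i_1,\dots,i_n}^{2k}\in\operatorname{qm}(\emptyset,\emptyset)$.
   Context: Let $\mathbb{R}[\underline x]=\mathbb{R}[x_1,\dots,x_n]$, $\mathscr{M}=\mathbb{R}[\mathtt{m}_{i_1,\dots,i_n}\colon (i_1,\dots,i_n)\in\mathbb{N}_0^n]$ the polynomial ring in countably many indeterminates with $\mathtt{m}_{0,\dots,0}:=1$ (for $n=1$ these are $\mathtt{m}_i$, $i\in\mathbb{N}_0$), $\mathscr{M}[\underline x]=\mathscr{M}\otimes_{\mathbb{R}}\mathbb{R}[\underline x]$, and $\mathtt{m}:\mathscr{M}[\underline x]\to\mathscr{M}$ the unique $\mathscr{M}$-linear map with $\mathtt{m}(x_1^{i_1}\cdots x_n^{i_n})=\mathtt{m}_{i_1,\dots,i_n}$. $\operatorname{qm}(\emptyset,\emptyset)$ is the quadratic module of $\mathscr{M}$ generated by $\{\mathtt{m}(f^2)\colon f\in\mathscr{M}[\underline x]\}$, i.e. the smallest subset of $\mathscr{M}$ containing $1$ and these elements and closed under addition and under multiplication by squares of elements of $\mathscr{M}$. *)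

theory Defs
  imports Complex_Main "HOL-Library.Poly_Mapping"
begin

text \<open>Multi-indices (i_1,...,i_n) in N_0^n are finitely supported maps nat =>0 nat
  whose support lies in {..<n} (coordinate j corresponds to index j+1).\<close>

definition multi_idx :: "nat \<Rightarrow> (nat \<Rightarrow>\<^sub>0 nat) set" where
  "multi_idx n = {\<alpha>. Poly_Mapping.keys \<alpha> \<subseteq> {..<n}}"

text \<open>The ring M: real polynomials in indeterminates indexed by multi-indices
  (a monomial is a finitely supported map from indices to exponents).
  Only the indeterminates m_alpha with alpha in N_0^n, alpha nonzero, belong to M
  (m_0 := 1).\<close>

type_synonym mom = "((nat \<Rightarrow>\<^sub>0 nat) \<Rightarrow>\<^sub>0 nat) \<Rightarrow>\<^sub>0 real"

text \<open>M[x] = M tensor R[x_1..x_n]: polynomials in x with coefficients in M.\<close>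

type_synonym momx = "(nat \<Rightarrow>\<^sub>0 nat) \<Rightarrow>\<^sub>0 mom"

definition mvar :: "(nat \<Rightarrow>\<^sub>0 nat) \<Rightarrow> mom" where
  "mvar \<alpha> = (if \<alpha> = 0 then 1 else Poly_Mapping.single (Poly_Mapping.single \<alpha> 1) 1)"

definition in_M :: "nat \<Rightarrow> mom \<Rightarrow> bool" where
  "in_M n p \<longleftrightarrow> (\<forall>\<mu>\<in>Poly_Mapping.keys p. Poly_Mapping.keys \<mu> \<subseteq> {\<alpha>. \<alpha> \<in> multi_idx n \<and> \<alpha> \<noteq> 0})"

definition in_Mx :: "nat \<Rightarrow> momx \<Rightarrow> bool" where
  "in_Mx n f \<longleftrightarrow> (\<forall>\<beta>\<in>Poly_Mapping.keys f. \<beta> \<in> multi_idx n \<and> in_M n (Poly_Mapping.lookup f \<beta>))"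

definition mlin :: "momx \<Rightarrow> mom" where
  "mlin f = (\<Sum>\<beta>\<in>Poly_Mapping.keys f. Poly_Mapping.lookup f \<beta> * mvar \<beta>)"

inductive_set qm0 :: "nat \<Rightarrow> mom set" for n :: nat where
  one: "1 \<in> qm0 n"
| gen: "in_Mx n f \<Longrightarrow> mlin (f * f) \<in> qm0 n"
| add: "a \<in> qm0 n \<Longrightarrow> b \<in> qm0 n \<Longrightarrow> a + b \<in> qm0 n"
| sq: "a \<in> qm0 n \<Longrightarrow> in_M n g \<Longrightarrow> g * g * a \<in> qm0 n"

end

theory Submission
  imports Defs
begin


lemma u_id:
  fixes u v :: "'a::comm_ring_1"
  shows "u^(m+1) - of_nat(m+1)*u*v^m + of_nat m * v^(m+1)
     = (u-v)^2 * (\<Sum>j<m. of_nat(j+1)*u^(m-1-j)*v^j)"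
proof (induction m)
  case 0
  then show ?case by simp
next
  case (Suc m)
  have s: "(\<Sum>j<Suc m. of_nat(j+1)*u^(Suc m-1-j)*v^j)
      = u * (\<Sum>j<m. of_nat(j+1)*u^(m-1-j)*v^j) + of_nat(m+1)*v^m"
  proof -
    have "(\<Sum>j<m. of_nat(j+1)*u^(Suc m-1-j)*v^j) = u * (\<Sum>j<m. of_nat(j+1)*u^(m-1-j)*v^j)"
      unfolding sum_distrib_left
    proof (rule sum.cong)
      fix j assume "j \<in> {..<m}"
      then have "Suc m - 1 - j = Suc (m-1-j)" by auto
      then show "of_nat(j+1)*u^(Suc m-1-j)*v^j = u * (of_nat(j+1)*u^(m-1-j)*v^j)"
        by (simp add: algebra_simps)
    qed simp
    then show ?thesis by simp
  qed
  have "(u-v)^2 * (\<Sum>j<Suc m. of_nat(j+1)*u^(Suc m-1-j)*v^j)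
     = u * (u^(m+1) - of_nat(m+1)*u*v^m + of_nat m * v^(m+1)) + of_nat(m+1)*v^m*(u-v)^2"
    unfolding s Suc.IH by (simp add: algebra_simps)
  also have "\<dots> = u^(Suc m+1) - of_nat(Suc m+1)*u*v^Suc m + of_nat (Suc m) * v^(Suc m+1)"
    by (simp add: algebra_simps power2_eq_square)
  finally show ?case by simp
qed

lemma key_id:
  fixes x a :: "'a::comm_ring_1"
  shows "x^(2*m+2) - of_nat(2*m+2) * a^(2*m+1) * x + of_nat(2*m+1) * a^(2*m+2)
    = (\<Sum>j<m. of_nat(j+1) * (((x^2 - a^2) * x^(m-1-j) * a^j) * ((x^2 - a^2) * x^(m-1-j) * a^j)))
      + of_nat(m+1) * ((a^m*(x-a)) * (a^m*(x-a)))"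
proof -
  have "(\<Sum>j<m. of_nat(j+1) * (((x^2 - a^2) * x^(m-1-j) * a^j) * ((x^2 - a^2) * x^(m-1-j) * a^j)))
     = (x^2-a^2)^2 * (\<Sum>j<m. of_nat(j+1)*(x^2)^(m-1-j)*(a^2)^j)"
    unfolding sum_distrib_left
    by (rule sum.cong) (simp_all add: power_mult_distrib power2_eq_square algebra_simps flip: power_mult)
  also have "\<dots> = (x^2)^(m+1) - of_nat(m+1)*x^2*(a^2)^m + of_nat m * (a^2)^(m+1)"
    by (rule u_id[symmetric])
  finally have e: "(\<Sum>j<m. of_nat(j+1) * (((x^2 - a^2) * x^(m-1-j) * a^j) * ((x^2 - a^2) * x^(m-1-j) * a^j)))
     = (x^2)^(m+1) - of_nat(m+1)*x^2*(a^2)^m + of_nat m * (a^2)^(m+1)" .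
  have p1: "(x^2)^(m+1) = x^(2*m+2)" "(a^2)^m = a^(2*m)" "(a^2)^(m+1) = a^(2*m+2)"
    by (simp_all only: power_mult[symmetric]) (simp_all add: ac_simps)
  have p2: "a^(2*m+1) = a^(2*m)*a" "a^(2*m+2) = a^(2*m)*a*a" by (simp_all add: power_add)
  have p3: "a^m * a^m = a^(2*m)" by (simp add: mult_2 power_add)
  show ?thesis unfolding e p1 p2
    by (simp add: algebra_simps power2_eq_square power_mult_distrib p3)
qed



lemma lookup_pmap: "Poly_Mapping.lookup (Poly_Mapping.map f p) k = (f (Poly_Mapping.lookup p k) when Poly_Mapping.lookup p k \<noteq> 0)"
  by (simp add: Poly_Mapping.map.rep_eq)

lemma mlin_superset:
  assumes "finite S" "Poly_Mapping.keys f \<subseteq> S"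
  shows "mlin f = (\<Sum>\<beta>\<in>S. Poly_Mapping.lookup f \<beta> * mvar \<beta>)"
  unfolding mlin_def
  by (rule sum.mono_neutral_left) (use assms in \<open>auto simp: in_keys_iff\<close>)

lemma mlin_add: "mlin (f + g) = mlin f + mlin g"
proof -
  let ?S = "Poly_Mapping.keys f \<union> Poly_Mapping.keys g"
  have "mlin (f+g) = (\<Sum>\<beta>\<in>?S. Poly_Mapping.lookup (f+g) \<beta> * mvar \<beta>)"
    by (rule mlin_superset) (auto dest: keys_add[THEN subsetD])
  also have "\<dots> = (\<Sum>\<beta>\<in>?S. Poly_Mapping.lookup f \<beta> * mvar \<beta>) + (\<Sum>\<beta>\<in>?S. Poly_Mapping.lookup g \<beta> * mvar \<beta>)"
    by (simp add: lookup_add distrib_right sum.distrib)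
  also have "\<dots> = mlin f + mlin g"
    by (simp add: mlin_superset[symmetric])
  finally show ?thesis .
qed

lemma mlin_uminus: "mlin (- f) = - mlin f"
  unfolding mlin_def by (simp add: sum_negf)

lemma mlin_diff: "mlin (f - g) = mlin f - mlin g"
  using mlin_add[of f "-g"] by (simp add: mlin_uminus)

lemma mlin_zero: "mlin 0 = 0"
  by (simp add: mlin_def)

lemma mlin_single: "mlin (Poly_Mapping.single \<beta> c) = c * mvar \<beta>"
  by (simp add: mlin_def)

lemma mlin_sum: "mlin (sum F S) = (\<Sum>x\<in>S. mlin (F x))"
  by (induction S rule: infinite_finite_induct) (simp_all add: mlin_zero mlin_add)

lemma qm0_zero: "0 \<in> qm0 n"
proof -
  have "0 * 0 * 1 \<in> qm0 n" by (rule qm0.sq) (auto intro: qm0.one simp: in_M_def)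
  then show ?thesis by simp
qed

lemma qm0_of_nat: "mlin h \<in> qm0 n \<Longrightarrow> mlin (of_nat c * h) \<in> qm0 n"
  by (induction c) (simp_all add: mlin_zero qm0_zero mlin_add distrib_right qm0.add)

lemma qm0_sum: "(\<And>x. x \<in> S \<Longrightarrow> mlin (F x) \<in> qm0 n) \<Longrightarrow> mlin (sum F S) \<in> qm0 n"
  unfolding mlin_sum
  by (induction S rule: infinite_finite_induct) (simp_all add: qm0_zero qm0.add)

definition ip :: "nat \<Rightarrow> (nat \<Rightarrow>\<^sub>0 nat) \<Rightarrow> (nat \<Rightarrow>\<^sub>0 nat)" where
  "ip r i = Poly_Mapping.map ((*) r) i"

lemma ip_Suc: "ip (Suc r) i = i + ip r i"
  by (rule poly_mapping_eqI) (simp add: ip_def lookup_pmap lookup_add when_def)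

lemma ip_0: "ip 0 i = 0"
  by (rule poly_mapping_eqI) (simp add: ip_def lookup_pmap when_def)

lemma X_pow: "(Poly_Mapping.single i (1::mom)) ^ r = Poly_Mapping.single (ip r i) 1"
  by (induction r) (simp_all add: ip_0 ip_Suc mult_single)

lemma A_pow: "(Poly_Mapping.single 0 (c::mom)) ^ r = Poly_Mapping.single 0 (c ^ r)"
  by (induction r) (simp_all add: mult_single)

lemma multi_idx_add: "a \<in> multi_idx n \<Longrightarrow> b \<in> multi_idx n \<Longrightarrow> a + b \<in> multi_idx n"
  unfolding multi_idx_def using keys_add[of a b] by auto

lemma ip_multi: "i \<in> multi_idx n \<Longrightarrow> ip r i \<in> multi_idx n"
  by (induction r) (simp_all add: ip_0 ip_Suc multi_idx_add, simp add: multi_idx_def)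

lemma in_M_add: "in_M n p \<Longrightarrow> in_M n q \<Longrightarrow> in_M n (p + q)"
  unfolding in_M_def using keys_add[of p q] by blast

lemma in_M_uminus: "in_M n p \<Longrightarrow> in_M n (- p)"
  unfolding in_M_def by simp

lemma in_M_diff: "in_M n p \<Longrightarrow> in_M n q \<Longrightarrow> in_M n (p - q)"
  using in_M_add[of n p "-q"] in_M_uminus[of n q] by simp

lemma in_M_mult: "in_M n p \<Longrightarrow> in_M n q \<Longrightarrow> in_M n (p * q)"
  unfolding in_M_def
proof
  fix \<mu> assume p: "\<forall>\<mu>\<in>Poly_Mapping.keys p. Poly_Mapping.keys \<mu> \<subseteq> {\<alpha>. \<alpha> \<in> multi_idx n \<and> \<alpha> \<noteq> 0}"
    and q: "\<forall>\<mu>\<in>Poly_Mapping.keys q. Poly_Mapping.keys \<mu> \<subseteq> {\<alpha>. \<alpha> \<in> multi_idx n \<and> \<alpha> \<noteq> 0}"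
    and m: "\<mu> \<in> Poly_Mapping.keys (p * q)"
  then obtain a b where "\<mu> = a + b" "a \<in> Poly_Mapping.keys p" "b \<in> Poly_Mapping.keys q"
    using keys_mult[of p q] by blast
  then show "Poly_Mapping.keys \<mu> \<subseteq> {\<alpha>. \<alpha> \<in> multi_idx n \<and> \<alpha> \<noteq> 0}"
    using p q keys_add[of a b] by blast
qed

lemma in_M_one: "in_M n 1"
  by (simp add: in_M_def)

lemma in_M_pow: "in_M n p \<Longrightarrow> in_M n (p ^ r)"
  by (induction r) (simp_all add: in_M_one in_M_mult)

lemma in_M_of_nat: "in_M n (of_nat c)"
  by (induction c) (simp_all add: in_M_def[of n 0] in_M_one in_M_add)

lemma in_M_mvar: "i \<in> multi_idx n \<Longrightarrow> in_M n (mvar i)"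
  by (simp add: mvar_def in_M_one) (simp add: in_M_def)

lemma in_Mx_single: "\<beta> \<in> multi_idx n \<Longrightarrow> in_M n c \<Longrightarrow> in_Mx n (Poly_Mapping.single \<beta> c)"
  by (simp add: in_Mx_def)

lemma in_Mx_diff: "in_Mx n f \<Longrightarrow> in_Mx n g \<Longrightarrow> in_Mx n (f - g)"
  unfolding in_Mx_def
proof
  fix \<beta> assume f: "\<forall>\<beta>\<in>Poly_Mapping.keys f. \<beta> \<in> multi_idx n \<and> in_M n (Poly_Mapping.lookup f \<beta>)"
    and g: "\<forall>\<beta>\<in>Poly_Mapping.keys g. \<beta> \<in> multi_idx n \<and> in_M n (Poly_Mapping.lookup g \<beta>)"
    and b: "\<beta> \<in> Poly_Mapping.keys (f - g)"
  have z: "in_M n 0" by (simp add: in_M_def)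
  have "in_M n (Poly_Mapping.lookup f \<beta>)" using f z by (cases "\<beta> \<in> Poly_Mapping.keys f") (auto simp: in_keys_iff)
  moreover have "in_M n (Poly_Mapping.lookup g \<beta>)" using g z by (cases "\<beta> \<in> Poly_Mapping.keys g") (auto simp: in_keys_iff)
  ultimately show "\<beta> \<in> multi_idx n \<and> in_M n (Poly_Mapping.lookup (f - g) \<beta>)"
    using b keys_diff[of f g] f g by (auto simp: lookup_minus in_M_diff)
qed

lemma mvar_0: "mvar 0 = 1" by (simp add: mvar_def)


lemma main_pos:
  assumes i: "i \<in> multi_idx n"
  shows "mvar (ip (2*m+2) i) - (mvar i) ^ (2*m+2) \<in> qm0 n"
proof -
  define a where "a = mvar i"
  define X where "X = (Poly_Mapping.single i 1 :: momx)"
  define A where "A = (Poly_Mapping.single 0 a :: momx)"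
  have aM: "in_M n a" unfolding a_def using i by (rule in_M_mvar)
  have z: "(0::nat\<Rightarrow>\<^sub>0nat) \<in> multi_idx n" by (simp add: multi_idx_def)
  have of_nat_s: "(of_nat c :: momx) = Poly_Mapping.single 0 (of_nat c)" for c by simp
  have lhs: "mlin (X^(2*m+2) - of_nat(2*m+2) * A^(2*m+1) * X + of_nat(2*m+1) * A^(2*m+2))
     = mvar (ip (2*m+2) i) - a ^ (2*m+2)"
    unfolding X_def A_def X_pow A_pow of_nat_s mult_single mlin_add mlin_diff mlin_single
    apply (simp add: mvar_0 a_def[symmetric])
    by (simp add: algebra_simps)
  have F: "mlin (of_nat(j+1) * (((X^2 - A^2) * X^(m-1-j) * A^j) * ((X^2 - A^2) * X^(m-1-j) * A^j))) \<in> qm0 n" for j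
  proof -
    have "in_Mx n ((X^2 - A^2) * X^(m-1-j) * A^j)"
      unfolding X_def A_def X_pow A_pow left_diff_distrib right_diff_distrib mult_single
      by (intro in_Mx_diff in_Mx_single multi_idx_add ip_multi i z in_M_mult in_M_pow aM in_M_one)
    then show ?thesis by (intro qm0_of_nat qm0.gen)
  qed
  have G: "mlin (of_nat(m+1) * ((A^m*(X-A)) * (A^m*(X-A)))) \<in> qm0 n"
  proof -
    have "in_Mx n (A^m*(X-A))"
      unfolding X_def A_def X_pow A_pow left_diff_distrib right_diff_distrib mult_single
      by (intro in_Mx_diff in_Mx_single multi_idx_add ip_multi i z in_M_mult in_M_pow aM in_M_one)
    then show ?thesis by (intro qm0_of_nat qm0.gen)
  qed
  have "mlin (X^(2*m+2) - of_nat(2*m+2) * A^(2*m+1) * X + of_nat(2*m+1) * A^(2*m+2)) \<in> qm0 n"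
    unfolding key_id mlin_add
    by (intro qm0.add qm0_sum F G)
  then show ?thesis unfolding lhs a_def .
qed



lemma part2:
  assumes "i \<in> multi_idx n"
  shows "mvar (Poly_Mapping.map (\<lambda>j. 2 * k * j) i) - (mvar i) ^ (2 * k) \<in> qm0 n"
proof (cases k)
  case 0
  have "Poly_Mapping.map (\<lambda>j. 2 * k * j) i = 0"
    by (rule poly_mapping_eqI) (simp add: 0 lookup_pmap when_def)
  then show ?thesis using 0 by (simp add: mvar_0 qm0_zero)
next
  case (Suc m)
  have e: "(\<lambda>j. 2 * k * j) = (*) (2*m+2)" using Suc by (simp add: fun_eq_iff)
  have k2: "2 * k = 2*m+2" using Suc by simp
  show ?thesis unfolding e k2 using main_pos[OF assms, of m] unfolding ip_def .
qed

theorem lemma2p2: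
  fixes k :: nat
  shows "mvar (Poly_Mapping.single 0 (2 * k)) - (mvar (Poly_Mapping.single 0 1)) ^ (2 * k) \<in> qm0 1
    \<and> (\<forall>n i. n \<ge> 1 \<longrightarrow> i \<in> multi_idx n \<longrightarrow>
           mvar (Poly_Mapping.map (\<lambda>j. 2 * k * j) i) - (mvar i) ^ (2 * k) \<in> qm0 n)"
proof
  have m: "Poly_Mapping.single 0 (1::nat) \<in> multi_idx 1" by (simp add: multi_idx_def)
  have "Poly_Mapping.map (\<lambda>j. 2 * k * j) (Poly_Mapping.single 0 (1::nat)) = Poly_Mapping.single 0 (2*k)"
    by simp
  then show "mvar (Poly_Mapping.single 0 (2 * k)) - (mvar (Poly_Mapping.single 0 1)) ^ (2 * k) \<in> qm0 1"
    using part2[OF m, of k] by simp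
  show "\<forall>n i. n \<ge> 1 \<longrightarrow> i \<in> multi_idx n \<longrightarrow>
           mvar (Poly_Mapping.map (\<lambda>j. 2 * k * j) i) - (mvar i) ^ (2 * k) \<in> qm0 n"
    using part2 by blast
qed

end
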